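(* Let $k\ge2$. Then $\mathfrak a_kL_{k-1}=L_k\mathfrak a_k$ as operators $\mathbb R^{\Xi_{k-1}}\to\mathbb R^{\Xi_k}$.
   Context: $V$ is a finite set with symmetric non-negative weights $c_{xy}=c_{yx}\ge0$, $\alpha=(\alpha_x)$ positive. $\Xi_m:=\{\eta\in\mathbb N_0^V:\sum_x\eta_x=m\}$. $L_mf(\eta)=\sum_x\eta_x\sum_yc_{xy}(\alpha_y+\eta_y)(f(\eta-\delta_x+\delta_y)-f(\eta))$ for $f:\Xi_m\to\mathbb R$, where $\eta-\delta_x+\delta_y$ moves one particle from $x$ to $y$. $\mathfrak a_k g(\eta)=\sum_x\eta_x g(\eta-\delta_x)$ for $g:\Xi_{k-1}\to\mathbb R$, $\eta\in\Xi_k$. *)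

theory Defs
  imports Complex_Main
begin

text \<open>Vertex set V is the finite type 'v. Configurations are functions 'v => nat.\<close>

definition Xi :: "nat \<Rightarrow> ('v::finite \<Rightarrow> nat) set" where
  "Xi m = {\<eta>. (\<Sum>x\<in>UNIV. \<eta> x) = m}"

text \<open>eta - delta_x (only used where eta x >= 1, otherwise multiplied by eta x = 0)\<close>
definition remove_particle :: "('v \<Rightarrow> nat) \<Rightarrow> 'v \<Rightarrow> ('v \<Rightarrow> nat)" where
  "remove_particle \<eta> x = (\<lambda>z. \<eta> z - (if z = x then 1 else 0))"

definition move_particle :: "('v \<Rightarrow> nat) \<Rightarrow> 'v \<Rightarrow> 'v \<Rightarrow> ('v \<Rightarrow> nat)" where
  "move_particle \<eta> x y = (\<lambda>z. \<eta> z - (if z = x then 1 else 0) + (if z = y then 1 else 0))"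

text \<open>Generator L_m (the formula does not depend on m; it is applied on Xi m).\<close>
definition gen :: "('v::finite \<Rightarrow> 'v \<Rightarrow> real) \<Rightarrow> ('v \<Rightarrow> real)
    \<Rightarrow> (('v \<Rightarrow> nat) \<Rightarrow> real) \<Rightarrow> ('v \<Rightarrow> nat) \<Rightarrow> real" where
  "gen c \<alpha> f \<eta> = (\<Sum>x\<in>UNIV. real (\<eta> x) * (\<Sum>y\<in>UNIV. c x y * (\<alpha> y + real (\<eta> y)) *
        (f (move_particle \<eta> x y) - f \<eta>)))"

definition annih :: "(('v::finite \<Rightarrow> nat) \<Rightarrow> real) \<Rightarrow> ('v \<Rightarrow> nat) \<Rightarrow> real" where
  "annih g \<eta> = (\<Sum>x\<in>UNIV. real (\<eta> x) * g (remove_particle \<eta> x))"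

end

theory Submission
  imports Defs
begin

lemma H1:
  assumes "\<eta> x \<ge> 1" "remove_particle \<eta> x z \<ge> 1"
  shows "move_particle (remove_particle \<eta> x) z y = remove_particle (move_particle \<eta> z y) x"
proof (rule ext)
  fix w show "move_particle (remove_particle \<eta> x) z y w = remove_particle (move_particle \<eta> z y) x w"
    using assms unfolding move_particle_def remove_particle_def by (cases "w = x"; cases "w = y"; cases "w = z") auto
qed

lemma H2:
  assumes "\<eta> z \<ge> 1"
  shows "remove_particle (move_particle \<eta> z x) x = remove_particle \<eta> z"
  using assms unfolding move_particle_def remove_particle_def by (auto split: if_splits)

lemma H3:
  assumes "\<eta> x \<ge> 1"
  shows "move_particle \<eta> x x = \<eta>"
  using assms unfolding move_particle_def by auto

lemma rem_val: "remove_particle \<eta> x w = \<eta> w - (if w = x then 1 else 0)"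
  unfolding remove_particle_def by simp

lemma mov_val: "move_particle \<eta> z y w = \<eta> w - (if w = z then 1 else 0) + (if w = y then 1 else 0)"
  unfolding move_particle_def by simp

lemma key:
  fixes \<eta> :: "'v \<Rightarrow> nat" and g :: "('v \<Rightarrow> nat) \<Rightarrow> real"
  shows "real (\<eta> x) * (real (remove_particle \<eta> x z) * (c z y * (\<alpha> y + real (remove_particle \<eta> x y)) *
      (g (move_particle (remove_particle \<eta> x) z y) - g (remove_particle \<eta> x))))
   - real (\<eta> z) * (c z y * (\<alpha> y + real (\<eta> y)) * (real (move_particle \<eta> z y x) *
      g (remove_particle (move_particle \<eta> z y) x) - real (\<eta> x) * g (remove_particle \<eta> x)))
   = (if x = y then - c z x * (real (\<eta> x) * real (\<eta> z) - (if z = x then real (\<eta> x) else 0)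
        + real (\<eta> z) * (\<alpha> x + real (\<eta> x))) * g (remove_particle \<eta> z) else 0)
     + c z y * g (remove_particle \<eta> x) * real (\<eta> x) *
       ((if z = x then \<alpha> y + real (\<eta> y) else 0) + (if y = x then real (\<eta> z) - (if z = x then 1 else 0) else 0))"
proof -
  consider "x \<noteq> y" "z \<noteq> x" | "x \<noteq> y" "z = x" | "x = y" "z \<noteq> x" | "x = y" "z = x" by blast
  then show ?thesis
  proof cases
    case 1
    show ?thesis
    proof (cases "\<eta> x \<ge> 1 \<and> \<eta> z \<ge> 1")
      case True
      then have "move_particle (remove_particle \<eta> x) z y = remove_particle (move_particle \<eta> z y) x"
        using 1 by (intro H1) (auto simp: rem_val)
      then show ?thesis using 1 by (simp add: rem_val mov_val algebra_simps)
    next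
      case False
      then have "\<eta> x = 0 \<or> \<eta> z = 0" by auto
      then show ?thesis using 1 by (auto simp: rem_val mov_val algebra_simps)
    qed
  next
    case 2
    show ?thesis
    proof (cases "\<eta> x \<ge> 2")
      case True
      then have "move_particle (remove_particle \<eta> x) z y = remove_particle (move_particle \<eta> z y) x"
        using 2 by (intro H1) (auto simp: rem_val)
      then show ?thesis using 2 True by (simp add: rem_val mov_val of_nat_diff algebra_simps)
    next
      case False
      then have "\<eta> x = 0 \<or> \<eta> x = 1" by auto
      then show ?thesis using 2 by (auto simp: rem_val mov_val algebra_simps)
    qed
  next
    case 3
    show ?thesis
    proof (cases "\<eta> z \<ge> 1")
      case True
      have e2: "remove_particle (move_particle \<eta> z x) x = remove_particle \<eta> z" using True by (rule H2)
      show ?thesis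
      proof (cases "\<eta> x \<ge> 1")
        case True2: True
        have "move_particle (remove_particle \<eta> x) z x = remove_particle (move_particle \<eta> z x) x"
          using 3 True True2 by (intro H1) (auto simp: rem_val)
        then show ?thesis using 3 True2 e2 by (simp add: rem_val mov_val of_nat_diff algebra_simps)
      next
        case False
        then have "\<eta> x = 0" by simp
        then show ?thesis using 3 e2 by (simp add: rem_val mov_val algebra_simps)
      qed
    next
      case False
      then have "\<eta> z = 0" by simp
      then show ?thesis using 3 by (simp add: rem_val mov_val algebra_simps)
    qed
  next
    case 4
    show ?thesis
    proof (cases "\<eta> x \<ge> 1")
      case True
      have e3: "move_particle \<eta> x x = \<eta>" using True by (rule H3)
      show ?thesis
      proof (cases "\<eta> x \<ge> 2")
        case True2: True
        have "move_particle (remove_particle \<eta> x) x x = remove_particle \<eta> x"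
          by (rule H3) (use True2 in \<open>simp add: rem_val\<close>)
        then show ?thesis using 4 True e3 by (simp add: rem_val of_nat_diff algebra_simps)
      next
        case False
        then have "\<eta> x = 1" using True by auto
        then show ?thesis using 4 e3 by (simp add: rem_val algebra_simps)
      qed
    next
      case False
      then have "\<eta> x = 0" by simp
      then show ?thesis using 4 by (simp add: rem_val algebra_simps)
    qed
  qed
qed

theorem propositionA5:
  fixes c :: "'v::finite \<Rightarrow> 'v \<Rightarrow> real" and \<alpha> :: "'v \<Rightarrow> real" and k :: nat
    and g :: "('v \<Rightarrow> nat) \<Rightarrow> real"
  assumes "\<And>x y. c x y = c y x" and "\<And>x y. c x y \<ge> 0" and "\<And>x. \<alpha> x > 0"
    and "k \<ge> 2"
  shows "\<forall>\<eta>\<in>Xi k. annih (gen c \<alpha> g) \<eta> = gen c \<alpha> (annih g) \<eta>"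
proof
  fix \<eta> :: "'v \<Rightarrow> nat"
  define n where "n w = real (\<eta> w)" for w
  define r where "r = remove_particle \<eta>"
  define m where "m = move_particle \<eta>"
  define L where "L x z y = real (\<eta> x) * (real (remove_particle \<eta> x z) * (c z y * (\<alpha> y + real (remove_particle \<eta> x y)) *
      (g (move_particle (remove_particle \<eta> x) z y) - g (remove_particle \<eta> x))))" for x z y
  define R where "R x z y = real (\<eta> z) * (c z y * (\<alpha> y + real (\<eta> y)) * (real (move_particle \<eta> z y x) *
      g (remove_particle (move_particle \<eta> z y) x) - real (\<eta> x) * g (remove_particle \<eta> x)))" for x z y
  define E where "E x z y = (if x = y then - c z x * (real (\<eta> x) * real (\<eta> z) - (if z = x then real (\<eta> x) else 0)
        + real (\<eta> z) * (\<alpha> x + real (\<eta> x))) * g (remove_particle \<eta> z) else 0)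
     + c z y * g (remove_particle \<eta> x) * real (\<eta> x) *
       ((if z = x then \<alpha> y + real (\<eta> y) else 0) + (if y = x then real (\<eta> z) - (if z = x then 1 else 0) else 0))" for x z y
  have LRE: "L x z y - R x z y = E x z y" for x z y
    unfolding L_def R_def E_def by (rule key)
  have lhs: "annih (gen c \<alpha> g) \<eta> = (\<Sum>x\<in>UNIV. \<Sum>z\<in>UNIV. \<Sum>y\<in>UNIV. L x z y)"
    unfolding annih_def gen_def L_def by (simp add: sum_distrib_left mult.assoc)
  have rhs: "gen c \<alpha> (annih g) \<eta> = (\<Sum>x\<in>UNIV. \<Sum>z\<in>UNIV. \<Sum>y\<in>UNIV. R x z y)"
  proof -
    have "gen c \<alpha> (annih g) \<eta> = (\<Sum>z\<in>UNIV. \<Sum>y\<in>UNIV. \<Sum>x\<in>UNIV. R x z y)"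
      unfolding annih_def gen_def R_def
      by (simp only: sum_distrib_left sum_subtractf[symmetric])
    also have "\<dots> = (\<Sum>z\<in>UNIV. \<Sum>x\<in>UNIV. \<Sum>y\<in>UNIV. R x z y)"
      by (rule sum.cong[OF refl], rule sum.swap)
    also have "\<dots> = (\<Sum>x\<in>UNIV. \<Sum>z\<in>UNIV. \<Sum>y\<in>UNIV. R x z y)"
      by (rule sum.swap)
    finally show ?thesis .
  qed
  have diff: "annih (gen c \<alpha> g) \<eta> - gen c \<alpha> (annih g) \<eta> = (\<Sum>x\<in>UNIV. \<Sum>z\<in>UNIV. \<Sum>y\<in>UNIV. E x z y)"
    unfolding lhs rhs by (simp add: sum_subtractf[symmetric] LRE)
  define A where "A x z = - c z x * (n x * n z - (if z = x then n x else 0) + n z * (\<alpha> x + n x)) * g (r z)" for x z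
  define B where "B x z = c z x * g (r x) * n x * (n z - (if z = x then 1 else 0))" for x z
  define S where "S x z = c x z * g (r x) * n x * (\<alpha> z + n z)" for x z
  have Ey: "(\<Sum>y\<in>UNIV. E x z y) = A x z + (if z = x then (\<Sum>y\<in>UNIV. S x y) else 0) + B x z" for x z
  proof -
    have "E x z y = (if x = y then A x z + B x z else 0) + (if z = x then S x y else 0)" for y
      unfolding E_def A_def B_def S_def n_def r_def by (auto simp: algebra_simps)
    then show ?thesis by (simp add: sum.distrib)
  qed
  have "(\<Sum>x\<in>UNIV. \<Sum>z\<in>UNIV. \<Sum>y\<in>UNIV. E x z y)
      = (\<Sum>x\<in>UNIV. \<Sum>z\<in>UNIV. A x z) + (\<Sum>x\<in>UNIV. \<Sum>z\<in>UNIV. B x z + S x z)"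
    by (simp add: Ey sum.distrib)
  also have "(\<Sum>x\<in>UNIV. \<Sum>z\<in>UNIV. A x z) = (\<Sum>x\<in>UNIV. \<Sum>z\<in>UNIV. A z x)"
    by (rule sum.swap)
  also have "\<dots> + (\<Sum>x\<in>UNIV. \<Sum>z\<in>UNIV. B x z + S x z) = (\<Sum>x\<in>UNIV. \<Sum>z\<in>UNIV. A z x + B x z + S x z)"
    by (simp add: sum.distrib add.assoc)
  also have "\<dots> = 0"
  proof -
    have "A z x + B x z + S x z = 0" for x z
      unfolding A_def B_def S_def using assms(1)[of x z] by (cases "x = z") (auto simp: algebra_simps)
    then show ?thesis by simp
  qed
  finally have "(\<Sum>x\<in>UNIV. \<Sum>z\<in>UNIV. \<Sum>y\<in>UNIV. E x z y) = 0" .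
  then show "annih (gen c \<alpha> g) \<eta> = gen c \<alpha> (annih g) \<eta>" using diff by simp
qed

end
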